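(* Let $G$ be a simple connected graph with $n$ vertices $v_1,\dots,v_n$ and $m$ edges, let $d_i$ denote the degree of $v_i$, and let $\Delta=\max_{1\le i\le n} d_i$. Then $$\rho_{ABC}(G)\le \sqrt{\Delta+\frac{2m-n+1}{\Delta}-2}.$$ Moreover, the bound is attainable, i.e., there exist connected graphs for which equality holds.
   Context: For a simple connected graph $G$ with vertex set $\{v_1,\dots,v_n\}$ and degrees $d_i$, the ABC matrix is $M(G)=(m_{ij})_{n\times n}$ with $m_{ij}=\sqrt{(d_i+d_j-2)/(d_id_j)}$ if $v_iv_j$ is an edge and $m_{ij}=0$ otherwise. The ABC spectral radius $\rho_{ABC}(G)$ is the largest eigenvalue of $M(G)$. *)

theory Defs
  imports Complex_Main
begin

definition simple_graph :: "'a set \<Rightarrow> ('a \<Rightarrow> 'a \<Rightarrow> bool) \<Rightarrow> bool" where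
  "simple_graph V E \<longleftrightarrow> finite V \<and>
     (\<forall>u v. E u v \<longrightarrow> u \<in> V \<and> v \<in> V) \<and>
     (\<forall>u v. E u v \<longrightarrow> E v u) \<and> (\<forall>u. \<not> E u u)"

definition connected_graph :: "'a set \<Rightarrow> ('a \<Rightarrow> 'a \<Rightarrow> bool) \<Rightarrow> bool" where
  "connected_graph V E \<longleftrightarrow> simple_graph V E \<and> V \<noteq> {} \<and>
     (\<forall>u\<in>V. \<forall>v\<in>V. E\<^sup>*\<^sup>* u v)"

definition degree :: "'a set \<Rightarrow> ('a \<Rightarrow> 'a \<Rightarrow> bool) \<Rightarrow> 'a \<Rightarrow> nat" where
  "degree V E v = card {u \<in> V. E v u}"

definition num_edges :: "'a set \<Rightarrow> ('a \<Rightarrow> 'a \<Rightarrow> bool) \<Rightarrow> nat" where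
  "num_edges V E = card {{u, v} | u v. u \<in> V \<and> v \<in> V \<and> E u v}"

definition max_degree :: "'a set \<Rightarrow> ('a \<Rightarrow> 'a \<Rightarrow> bool) \<Rightarrow> nat" where
  "max_degree V E = Max (degree V E ` V)"

definition ABC_matrix :: "'a set \<Rightarrow> ('a \<Rightarrow> 'a \<Rightarrow> bool) \<Rightarrow> 'a \<Rightarrow> 'a \<Rightarrow> real" where
  "ABC_matrix V E u v =
     (if E u v then
        sqrt ((real (degree V E u) + real (degree V E v) - 2) /
              (real (degree V E u) * real (degree V E v)))
      else 0)"

definition is_eigenvalue :: "'a set \<Rightarrow> ('a \<Rightarrow> 'a \<Rightarrow> real) \<Rightarrow> real \<Rightarrow> bool" where
  "is_eigenvalue V A mu \<longleftrightarrow> (\<exists>x :: 'a \<Rightarrow> real. (\<exists>i\<in>V. x i \<noteq> 0) \<and>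
      (\<forall>i\<in>V. (\<Sum>j\<in>V. A i j * x j) = mu * x i))"

text \<open>Largest eigenvalue (the ABC matrix is real symmetric, so all eigenvalues are real).\<close>
definition ABC_spectral_radius :: "'a set \<Rightarrow> ('a \<Rightarrow> 'a \<Rightarrow> bool) \<Rightarrow> real" where
  "ABC_spectral_radius V E = Max {mu. is_eigenvalue V (ABC_matrix V E) mu}"

end

theory Submission
  imports Defs "Jordan_Normal_Form.Spectral_Radius" "HOL-Analysis.Convex"
begin


lemma eig_finite:
  fixes M :: "'a \<Rightarrow> 'a \<Rightarrow> real"
  assumes fin: "finite V"
  shows "finite {mu. is_eigenvalue V M mu}"
proof -
  define n where "n = card V"
  obtain f where f: "bij_betw f {0..<n} V"
    using ex_bij_betw_nat_finite[OF fin] n_def by blast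
  define A where "A = mat n n (\<lambda>(i,j). M (f i) (f j))"
  have A: "A \<in> carrier_mat n n" unfolding A_def by simp
  have "{mu. is_eigenvalue V M mu} \<subseteq> spectrum A"
  proof
    fix mu assume "mu \<in> {mu. is_eigenvalue V M mu}"
    then obtain x where x0: "\<exists>i\<in>V. x i \<noteq> 0" and ev: "\<forall>i\<in>V. (\<Sum>j\<in>V. M i j * x j) = mu * x i"
      unfolding is_eigenvalue_def by auto
    define v where "v = vec n (\<lambda>i. x (f i))"
    have v: "v \<in> carrier_vec n" unfolding v_def by simp
    have "v \<noteq> 0\<^sub>v n"
    proof
      assume "v = 0\<^sub>v n"
      then have "\<forall>i<n. x (f i) = 0" unfolding v_def by (metis index_vec index_zero_vec(1))
      moreover from x0 obtain u where "u \<in> V" "x u \<noteq> 0" by blast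
      moreover then obtain i where "i < n" "f i = u" using f unfolding bij_betw_def by auto
      ultimately show False by auto
    qed
    moreover have "A *\<^sub>v v = mu \<cdot>\<^sub>v v"
    proof (rule eq_vecI)
      fix i assume "i < dim_vec (mu \<cdot>\<^sub>v v)"
      then have i: "i < n" using v by simp
      have fi: "f i \<in> V" using f i unfolding bij_betw_def by auto
      have "(A *\<^sub>v v) $ i = (\<Sum>j<n. M (f i) (f j) * x (f j))"
        using i unfolding A_def v_def by (simp add: scalar_prod_def lessThan_atLeast0)
      also have "\<dots> = (\<Sum>u\<in>V. M (f i) u * x u)"
        using sum.reindex_bij_betw[OF f, of "\<lambda>u. M (f i) u * x u"] by (simp add: lessThan_atLeast0)
      also have "\<dots> = mu * x (f i)" using ev fi by auto
      finally show "(A *\<^sub>v v) $ i = (mu \<cdot>\<^sub>v v) $ i" using i unfolding v_def by simp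
    qed (simp add: A_def v_def)
    ultimately have "eigenvector A v mu" unfolding eigenvector_def using v A by simp
    then show "mu \<in> spectrum A" unfolding spectrum_def eigenvalue_def by auto
  qed
  then show ?thesis using card_finite_spectrum(1)[OF A] finite_subset by blast
qed



lemma eig_nonempty:
  fixes M :: "'a \<Rightarrow> 'a \<Rightarrow> real"
  assumes fin: "finite V" and ne: "V \<noteq> {}" and sym: "\<And>i j. M i j = M j i"
  shows "\<exists>mu. is_eigenvalue V M mu"
proof -
  define n where "n = card V"
  have n0: "n > 0" using fin ne n_def by (simp add: card_gt_0_iff)
  obtain f where f: "bij_betw f {0..<n} V"
    using ex_bij_betw_nat_finite[OF fin] n_def by blast
  define g where "g = inv_into {0..<n} f"
  have g: "bij_betw g V {0..<n}" unfolding g_def using f by (simp add: bij_betw_inv_into)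
  have fg: "\<And>u. u \<in> V \<Longrightarrow> f (g u) = u" unfolding g_def using f
    by (meson bij_betw_inv_into_right)
  have gf: "\<And>i. i < n \<Longrightarrow> g (f i) = i" unfolding g_def using f
    by (simp add: bij_betw_inv_into_left)
  define a where "a = (\<lambda>i j. M (f i) (f j))"
  have asym: "\<And>i j. a i j = a j i" unfolding a_def using sym by simp
  define A where "A = mat n n (\<lambda>(i,j). complex_of_real (a i j))"
  have A: "A \<in> carrier_mat n n" unfolding A_def by simp
  obtain lam where "lam \<in> spectrum A" using spectrum_non_empty[OF A n0] by blast
  then obtain v where v: "v \<in> carrier_vec n" and v0: "v \<noteq> 0\<^sub>v n" and ev: "A *\<^sub>v v = lam \<cdot>\<^sub>v v"
    unfolding spectrum_def eigenvalue_def eigenvector_def using A by auto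
  have evi: "(\<Sum>j<n. complex_of_real (a i j) * v $ j) = lam * v $ i" if i: "i < n" for i
  proof -
    have "(A *\<^sub>v v) $ i = (\<Sum>j<n. complex_of_real (a i j) * v $ j)"
      using i v unfolding A_def by (simp add: scalar_prod_def lessThan_atLeast0)
    then show ?thesis using ev i v by simp
  qed
  obtain k where k: "k < n" "v $ k \<noteq> 0"
    using v0 v by (metis carrier_vecD eq_vecI index_zero_vec(1) index_zero_vec(2))
  define Q where "Q = (\<Sum>i<n. cnj (v $ i) * (\<Sum>j<n. complex_of_real (a i j) * v $ j))"
  define R where "R = (\<Sum>i<n. cnj (v $ i) * v $ i)"
  have "Q = (\<Sum>i<n. cnj (v $ i) * (lam * v $ i))" unfolding Q_def
    by (intro sum.cong) (auto simp: evi)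
  then have QR: "Q = lam * R" unfolding R_def
    by (simp add: sum_distrib_left mult.commute mult.left_commute)
  have "cnj Q = (\<Sum>i<n. v $ i * (\<Sum>j<n. complex_of_real (a i j) * cnj (v $ j)))"
    unfolding Q_def by (simp add: cnj_sum)
  also have "\<dots> = (\<Sum>i<n. \<Sum>j<n. complex_of_real (a i j) * v $ i * cnj (v $ j))"
    by (simp add: sum_distrib_left mult.commute mult.left_commute)
  also have "\<dots> = (\<Sum>j<n. \<Sum>i<n. complex_of_real (a i j) * v $ i * cnj (v $ j))"
    by (rule sum.swap)
  also have "\<dots> = Q" unfolding Q_def
    by (simp add: sum_distrib_left asym mult.commute mult.left_commute)
  finally have cQ: "cnj Q = Q" .
  have Rre: "R = complex_of_real (\<Sum>i<n. (cmod (v $ i))\<^sup>2)"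
    unfolding R_def of_real_sum
  proof (intro sum.cong refl)
    fix i
    have "cnj (v $ i) * v $ i = v $ i * cnj (v $ i)" by (rule mult.commute)
    also have "\<dots> = complex_of_real ((cmod (v $ i))\<^sup>2)" by (rule complex_norm_square[symmetric])
    finally show "cnj (v $ i) * v $ i = complex_of_real ((cmod (v $ i))\<^sup>2)" .
  qed
  have "(\<Sum>i<n. (cmod (v $ i))\<^sup>2) > 0"
  proof -
    have "(\<Sum>i<n. (cmod (v $ i))\<^sup>2) \<ge> (cmod (v $ k))\<^sup>2"
      using k(1) by (intro member_le_sum) auto
    moreover have "(cmod (v $ k))\<^sup>2 > 0" using k by simp
    ultimately show ?thesis by linarith
  qed
  then have R0: "R \<noteq> 0" unfolding Rre by (metis less_irrefl of_real_eq_0_iff)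
  have "cnj lam * R = lam * R" using cQ QR Rre by (metis complex_cnj_complex_of_real complex_cnj_mult)
  then have "cnj lam = lam" using R0 by simp
  then have imlam: "Im lam = 0" by (metis cnj.simps(2) complex.expand equal_neg_zero)
  define r where "r = Re lam"
  have lamr: "lam = complex_of_real r" using imlam unfolding r_def by (simp add: complex_eq_iff)
  have evre: "(\<Sum>j<n. a i j * Re (v $ j)) = r * Re (v $ i)"
       and evim: "(\<Sum>j<n. a i j * Im (v $ j)) = r * Im (v $ i)" if i: "i < n" for i
  proof -
    have e: "(\<Sum>j<n. complex_of_real (a i j) * v $ j) = complex_of_real r * v $ i"
      using evi[OF i] lamr by simp
    from arg_cong[OF e, of Re] show "(\<Sum>j<n. a i j * Re (v $ j)) = r * Re (v $ i)"
      by (simp add: Re_sum)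
    from arg_cong[OF e, of Im] show "(\<Sum>j<n. a i j * Im (v $ j)) = r * Im (v $ i)"
      by (simp add: Im_sum)
  qed
  have transfer: "is_eigenvalue V M r" if w: "\<And>i. i < n \<Longrightarrow> (\<Sum>j<n. a i j * w j) = r * w i"
    and wk: "w k \<noteq> 0" for w
  proof -
    define x where "x = (\<lambda>u. w (g u))"
    have "f k \<in> V" using f k(1) unfolding bij_betw_def by auto
    moreover have "x (f k) \<noteq> 0" unfolding x_def using gf[OF k(1)] wk by simp
    moreover have "(\<Sum>j\<in>V. M i j * x j) = r * x i" if iV: "i \<in> V" for i
    proof -
      have gi: "g i < n" using g iV unfolding bij_betw_def by auto
      have "(\<Sum>j\<in>V. M i j * x j) = (\<Sum>j<n. M i (f j) * x (f j))"
        using sum.reindex_bij_betw[OF f, of "\<lambda>u. M i u * x u"] by (simp add: lessThan_atLeast0)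
      also have "\<dots> = (\<Sum>j<n. a (g i) j * w j)"
        unfolding a_def x_def using fg[OF iV] gf by (intro sum.cong) auto
      also have "\<dots> = r * x i" using w[OF gi] x_def by simp
      finally show ?thesis .
    qed
    ultimately show ?thesis unfolding is_eigenvalue_def by blast
  qed
  show ?thesis
  proof (cases "Re (v $ k) = 0")
    case True
    then have "Im (v $ k) \<noteq> 0" using k(2) by (simp add: complex_eq_iff)
    then show ?thesis using transfer[of "\<lambda>j. Im (v $ j)"] evim by blast
  next
    case False
    then show ?thesis using transfer[of "\<lambda>j. Re (v $ j)"] evre by blast
  qed
qed



lemma handshake:
  assumes g: "simple_graph V E"
  shows "(\<Sum>u\<in>V. Defs.degree V E u) = 2 * num_edges V E"
proof -
  have fin: "finite V" and inV: "\<And>u v. E u v \<Longrightarrow> u \<in> V \<and> v \<in> V"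
    and sym: "\<And>u v. E u v \<Longrightarrow> E v u" and irr: "\<And>u. \<not> E u u"
    using g unfolding simple_graph_def by auto
  define P where "P = Sigma V (\<lambda>u. {v \<in> V. E u v})"
  define Ed where "Ed = {{u, v} | u v. u \<in> V \<and> v \<in> V \<and> E u v}"
  define h where "h = (\<lambda>p::'a \<times> 'a. {fst p, snd p})"
  have memP: "\<And>a b. (a, b) \<in> P \<longleftrightarrow> a \<in> V \<and> b \<in> V \<and> E a b"
    unfolding P_def by simp
  have finP: "finite P" unfolding P_def using fin by simp
  have cardP: "card P = (\<Sum>u\<in>V. Defs.degree V E u)"
    unfolding P_def Defs.degree_def using fin by (simp add: card_SigmaI)
  have EdP: "Ed = h ` P"
  proof (rule Set.set_eqI)
    fix e
    show "e \<in> Ed \<longleftrightarrow> e \<in> h ` P"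
    proof
      assume "e \<in> Ed"
      then obtain u v where "e = {u, v}" "u \<in> V" "v \<in> V" "E u v" unfolding Ed_def by blast
      then have "(u, v) \<in> P" "e = h (u, v)" using memP unfolding h_def by auto
      then show "e \<in> h ` P" by blast
    next
      assume "e \<in> h ` P"
      then obtain a b where "(a, b) \<in> P" "e = h (a, b)" by auto
      then have "e = {a, b}" "a \<in> V" "b \<in> V" "E a b" using memP unfolding h_def by auto
      then show "e \<in> Ed" unfolding Ed_def by blast
    qed
  qed
  have finEd: "finite Ed" using EdP finP by simp
  have grp: "(\<Sum>e\<in>Ed. \<Sum>p\<in>{p. p \<in> P \<and> h p = e}. (1::nat)) = (\<Sum>p\<in>P. 1)"
    by (rule sum.group[OF finP finEd]) (simp add: EdP)
  have "(\<Sum>e\<in>Ed. card {p \<in> P. h p = e}) = card P"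
    using grp by (simp only: card_eq_sum)
  moreover have "card {p \<in> P. h p = e} = 2" if e: "e \<in> Ed" for e
  proof -
    from e obtain u v where uv: "e = {u, v}" "u \<in> V" "v \<in> V" "E u v" unfolding Ed_def by blast
    have uv': "u \<noteq> v" using uv irr by blast
    have "{p \<in> P. h p = e} = {(u, v), (v, u)}"
    proof (rule Set.set_eqI)
      fix p :: "'a \<times> 'a"
      obtain a b where p: "p = (a, b)" by (cases p)
      have "h p = e \<longleftrightarrow> (a = u \<and> b = v) \<or> (a = v \<and> b = u)"
        unfolding p h_def uv(1) by (simp add: doubleton_eq_iff)
      moreover have "E v u" using sym uv(4) by blast
      ultimately show "p \<in> {p \<in> P. h p = e} \<longleftrightarrow> p \<in> {(u, v), (v, u)}"
        using memP uv unfolding p by auto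
    qed
    then show ?thesis using uv' by simp
  qed
  ultimately have "card P = 2 * card Ed" by simp
  then show ?thesis unfolding num_edges_def Ed_def using cardP by simp
qed

lemma degree_pos:
  assumes c: "connected_graph V E" and n2: "card V \<ge> 2" and u: "u \<in> V"
  shows "Defs.degree V E u \<ge> 1"
proof -
  have g: "simple_graph V E" and conn: "\<forall>u\<in>V. \<forall>v\<in>V. E\<^sup>*\<^sup>* u v"
    using c unfolding connected_graph_def by auto
  have fin: "finite V" and inV: "\<And>u v. E u v \<Longrightarrow> u \<in> V \<and> v \<in> V"
    using g unfolding simple_graph_def by auto
  obtain v where v: "v \<in> V" "v \<noteq> u"
  proof -
    have "V - {u} \<noteq> {}"
    proof
      assume "V - {u} = {}"
      then have "V \<subseteq> {u}" by auto
      then have "card V \<le> card {u}" by (intro card_mono) auto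
      then have "card V \<le> 1" by simp
      then show False using n2 by simp
    qed
    then show ?thesis using that by auto
  qed
  have "E\<^sup>*\<^sup>* u v" using conn u v by auto
  then obtain w where "E u w" using v(2) by (metis converse_rtranclpE)
  then have "w \<in> {w \<in> V. E u w}" using inV by auto
  then have "card {w \<in> V. E u w} \<noteq> 0" using fin by auto
  then show ?thesis unfolding Defs.degree_def by simp
qed

lemma key_arith:
  fixes S t D K :: real
  assumes "t \<ge> 1" "t \<le> D" "S \<le> K" "S \<le> t * D"
  shows "S / t + t \<le> D + K / D"
proof (cases "K \<le> t * D")
  case True
  have "S / t \<le> K / t" using assms by (simp add: divide_right_mono)
  moreover have "K / t + t \<le> D + K / D"
  proof -
    have "K / t + t - (D + K / D) = (D - t) * (K - t * D) / (t * D)"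
      using assms by (simp add: field_simps)
    moreover have "(D - t) * (K - t * D) \<le> 0" using True assms by (simp add: mult_nonneg_nonpos)
    moreover have "t * D > 0" using assms by simp
    ultimately show ?thesis by (smt (verit) divide_nonpos_pos)
  qed
  ultimately show ?thesis by linarith
next
  case False
  have "S / t \<le> D" using assms by (simp add: divide_le_eq mult.commute)
  moreover have "t \<le> K / D" using False assms by (simp add: le_divide_eq)
  ultimately show ?thesis by linarith
qed


lemma cs_sum:
  fixes f :: "'b \<Rightarrow> real"
  assumes "finite A"
  shows "(\<Sum>a\<in>A. f a)\<^sup>2 \<le> real (card A) * (\<Sum>a\<in>A. (f a)\<^sup>2)"
  using sum_squared_le_sum_of_squares[of f A] by (simp add: mult.commute)


lemma eig_bound:
  assumes c: "connected_graph V E" and n2: "card V \<ge> 2"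
    and ev: "is_eigenvalue V (ABC_matrix V E) mu"
  shows "mu \<le> sqrt (real (max_degree V E)
                 + (2 * real (num_edges V E) - real (card V) + 1) / real (max_degree V E) - 2)"
proof -
  have g: "simple_graph V E" using c unfolding connected_graph_def by auto
  have fin: "finite V" and inV: "\<And>u v. E u v \<Longrightarrow> u \<in> V \<and> v \<in> V"
    and sym: "\<And>u v. E u v \<Longrightarrow> E v u" and irr: "\<And>u. \<not> E u u"
    using g unfolding simple_graph_def by auto
  define d where "d = (\<lambda>u. real (Defs.degree V E u))"
  define N where "N = (\<lambda>u. {w \<in> V. E u w})"
  define D where "D = real (max_degree V E)"
  define K where "K = 2 * real (num_edges V E) - real (card V) + 1"
  define M where "M = ABC_matrix V E"
  define B where "B = D + K / D - 2"
  have finN: "\<And>u. finite (N u)" unfolding N_def using fin by auto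
  have cardN: "\<And>u. real (card (N u)) = d u" unfolding N_def d_def Defs.degree_def by simp
  have dpos: "\<And>u. u \<in> V \<Longrightarrow> d u \<ge> 1" unfolding d_def using degree_pos[OF c n2] by simp
  have dle: "d u \<le> D" if "u \<in> V" for u
  proof -
    have "Defs.degree V E u \<le> Max (Defs.degree V E ` V)" using fin that by (intro Max_ge) auto
    then show ?thesis unfolding d_def D_def max_degree_def by simp
  qed
  have Mentry: "d u * (M u w)\<^sup>2 = (d u + d w - 2) / d w" if "u \<in> V" "w \<in> V" "E u w" for u w
  proof -
    have "d u \<ge> 1" "d w \<ge> 1" using dpos that by auto
    then have nn: "(d u + d w - 2) / (d u * d w) \<ge> 0"
      by (intro divide_nonneg_nonneg mult_nonneg_nonneg) auto
    have "M u w = sqrt ((d u + d w - 2) / (d u * d w))"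
      unfolding M_def ABC_matrix_def d_def using that by simp
    then have "(M u w)\<^sup>2 = (d u + d w - 2) / (d u * d w)" using nn by simp
    then have "d u * (M u w)\<^sup>2 = (d u * (d u + d w - 2)) / (d u * d w)"
      by (simp only: times_divide_eq_right)
    also have "\<dots> = (d u + d w - 2) / d w"
      using \<open>d u \<ge> 1\<close> by (intro mult_divide_mult_cancel_left) simp
    finally show ?thesis .
  qed
  from ev obtain x where x0: "\<exists>i\<in>V. x i \<noteq> 0"
    and evx: "\<And>i. i \<in> V \<Longrightarrow> (\<Sum>j\<in>V. M i j * x j) = mu * x i"
    unfolding is_eigenvalue_def M_def by auto
  define c where "c = (\<lambda>u w. (d u + d w - 2) / d w)"
  have step1: "(mu * x u)\<^sup>2 \<le> (\<Sum>w\<in>N u. c u w * (x w)\<^sup>2)" if u: "u \<in> V" for u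
  proof -
    have "(\<Sum>j\<in>N u. M u j * x j) = (\<Sum>j\<in>V. if E u j then M u j * x j else 0)"
      unfolding N_def using fin by (simp add: sum.inter_filter)
    also have "\<dots> = (\<Sum>j\<in>V. M u j * x j)"
      by (intro sum.cong refl) (simp add: M_def ABC_matrix_def)
    finally have "(\<Sum>j\<in>V. M u j * x j) = (\<Sum>j\<in>N u. M u j * x j)" by simp
    then have "(mu * x u)\<^sup>2 = (\<Sum>j\<in>N u. M u j * x j)\<^sup>2" using evx[OF u] by simp
    also have "\<dots> \<le> d u * (\<Sum>j\<in>N u. (M u j * x j)\<^sup>2)"
      using cs_sum[where A="N u" and f="\<lambda>j. M u j * x j"] finN[of u] cardN[of u] by simp
    also have "\<dots> = (\<Sum>j\<in>N u. d u * (M u j)\<^sup>2 * (x j)\<^sup>2)"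
      by (simp add: sum_distrib_left power_mult_distrib mult.assoc)
    also have "\<dots> = (\<Sum>w\<in>N u. c u w * (x w)\<^sup>2)"
      using u by (intro sum.cong refl) (auto simp: N_def c_def Mentry)
    finally show ?thesis .
  qed
  have swap: "(\<Sum>u\<in>V. \<Sum>w\<in>N u. c u w * (x w)\<^sup>2) = (\<Sum>w\<in>V. (x w)\<^sup>2 * (\<Sum>u\<in>N w. c u w))"
  proof -
    have "(\<Sum>u\<in>V. \<Sum>w\<in>N u. c u w * (x w)\<^sup>2) = (\<Sum>u\<in>V. \<Sum>w\<in>V. if E u w then c u w * (x w)\<^sup>2 else 0)"
      unfolding N_def using fin by (simp add: sum.inter_filter)
    also have "\<dots> = (\<Sum>w\<in>V. \<Sum>u\<in>V. if E u w then c u w * (x w)\<^sup>2 else 0)"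
      by (rule sum.swap)
    also have "\<dots> = (\<Sum>w\<in>V. \<Sum>u\<in>N w. c u w * (x w)\<^sup>2)"
    proof (rule sum.cong[OF refl])
      fix w assume "w \<in> V"
      have "(\<Sum>u\<in>N w. c u w * (x w)\<^sup>2) = (\<Sum>u\<in>V. if E w u then c u w * (x w)\<^sup>2 else 0)"
        unfolding N_def using fin by (simp add: sum.inter_filter)
      also have "\<dots> = (\<Sum>u\<in>V. if E u w then c u w * (x w)\<^sup>2 else 0)"
      proof (intro sum.cong refl)
        fix u
        have "E w u = E u w" using sym by blast
        then show "(if E w u then c u w * (x w)\<^sup>2 else 0) = (if E u w then c u w * (x w)\<^sup>2 else 0)"
          by simp
      qed
      finally show "(\<Sum>u\<in>V. if E u w then c u w * (x w)\<^sup>2 else 0) = (\<Sum>u\<in>N w. c u w * (x w)\<^sup>2)" by simp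
    qed
    also have "\<dots> = (\<Sum>w\<in>V. (x w)\<^sup>2 * (\<Sum>u\<in>N w. c u w))"
      by (simp add: sum_distrib_left mult.commute)
    finally show ?thesis .
  qed
  have Tw: "(\<Sum>u\<in>N w. c u w) \<le> B" if w: "w \<in> V" for w
  proof -
    define S where "S = (\<Sum>u\<in>N w. d u)"
    have t1: "d w \<ge> 1" using dpos w by simp
    have "(\<Sum>u\<in>N w. c u w) = (\<Sum>u\<in>N w. d u / d w + (d w - 2) / d w)"
      unfolding c_def by (intro sum.cong refl) (simp add: add_divide_distrib diff_divide_distrib)
    also have "\<dots> = S / d w + d w * ((d w - 2) / d w)"
      unfolding S_def sum.distrib by (simp add: sum_divide_distrib cardN)
    also have "\<dots> = S / d w + d w - 2" using t1 by simp
    finally have T: "(\<Sum>u\<in>N w. c u w) = S / d w + d w - 2" .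
    have S1: "S \<le> d w * D"
    proof -
      have "S \<le> (\<Sum>u\<in>N w. D)" unfolding S_def using dle by (intro sum_mono) (auto simp: N_def)
      then show ?thesis by (simp add: cardN)
    qed
    have S2: "S \<le> K"
    proof -
      define R where "R = V - N w - {w}"
      have wN: "w \<notin> N w" unfolding N_def using irr by auto
      have VN: "V = N w \<union> {w} \<union> R" unfolding R_def N_def using w by auto
      have finR: "finite R" unfolding R_def using fin by simp
      have d1: "(N w \<union> {w}) \<inter> R = {}" unfolding R_def by auto
      have d2: "N w \<inter> {w} = {}" using wN by auto
      have "(\<Sum>u\<in>V. d u) = (\<Sum>u\<in>N w \<union> {w}. d u) + (\<Sum>u\<in>R. d u)"
        unfolding VN by (rule sum.union_disjoint) (use finN finR d1 in auto)
      moreover have "(\<Sum>u\<in>N w \<union> {w}. d u) = S + d w"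
        unfolding S_def using finN wN by simp
      ultimately have "(\<Sum>u\<in>V. d u) = S + d w + (\<Sum>u\<in>R. d u)" by simp
      moreover have "(\<Sum>u\<in>V. d u) = 2 * real (num_edges V E)"
        unfolding d_def of_nat_sum[symmetric] handshake[OF g] by simp
      moreover have "(\<Sum>u\<in>R. d u) \<ge> real (card R)"
      proof -
        have "(\<Sum>u\<in>R. d u) \<ge> (\<Sum>u\<in>R. 1)" using dpos by (intro sum_mono) (auto simp: R_def)
        then show ?thesis by simp
      qed
      moreover have "card V = card (N w) + 1 + card R"
      proof -
        have "card V = card (N w \<union> {w}) + card R"
          unfolding VN by (rule card_Un_disjoint) (use finN finR d1 in auto)
        moreover have "card (N w \<union> {w}) = card (N w) + 1" using finN wN by simp
        ultimately show ?thesis by simp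
      qed
      ultimately show ?thesis unfolding K_def using cardN[of w] by simp
    qed
    have "S / d w + d w \<le> D + K / D"
      using key_arith[OF t1 dle[OF w] S2 S1] .
    then show ?thesis using T unfolding B_def by simp
  qed
  have "mu\<^sup>2 * (\<Sum>u\<in>V. (x u)\<^sup>2) = (\<Sum>u\<in>V. (mu * x u)\<^sup>2)"
    by (simp add: sum_distrib_left power_mult_distrib)
  also have "\<dots> \<le> (\<Sum>u\<in>V. \<Sum>w\<in>N u. c u w * (x w)\<^sup>2)"
    using step1 by (intro sum_mono) auto
  also have "\<dots> = (\<Sum>w\<in>V. (x w)\<^sup>2 * (\<Sum>u\<in>N w. c u w))" by (rule swap)
  also have "\<dots> \<le> (\<Sum>w\<in>V. (x w)\<^sup>2 * B)"
    using Tw by (intro sum_mono mult_left_mono) auto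
  also have "\<dots> = B * (\<Sum>u\<in>V. (x u)\<^sup>2)" by (simp add: sum_distrib_left mult.commute)
  finally have ineq: "mu\<^sup>2 * (\<Sum>u\<in>V. (x u)\<^sup>2) \<le> B * (\<Sum>u\<in>V. (x u)\<^sup>2)" .
  have pos: "(\<Sum>u\<in>V. (x u)\<^sup>2) > 0"
  proof -
    from x0 obtain i where i: "i \<in> V" "x i \<noteq> 0" by blast
    have "(\<Sum>u\<in>V. (x u)\<^sup>2) \<ge> (x i)\<^sup>2" using fin i by (intro member_le_sum) auto
    moreover have "(x i)\<^sup>2 > 0" using i by simp
    ultimately show ?thesis by linarith
  qed
  have "mu\<^sup>2 \<le> B" using ineq pos by simp
  then have "sqrt (mu\<^sup>2) \<le> sqrt B" by (rule real_sqrt_le_mono)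
  then have "mu \<le> sqrt B" by simp
  then show ?thesis unfolding B_def D_def K_def .
qed



lemma witness:
  "\<exists>(W :: nat set) F. connected_graph W F \<and> card W \<ge> 2 \<and>
              ABC_spectral_radius W F =
              sqrt (real (max_degree W F)
                 + (2 * real (num_edges W F) - real (card W) + 1) / real (max_degree W F) - 2)"
proof -
  define W :: "nat set" where "W = {0, 1}"
  define F :: "nat \<Rightarrow> nat \<Rightarrow> bool" where "F = (\<lambda>a b. (a = 0 \<and> b = 1) \<or> (a = 1 \<and> b = 0))"
  have sg: "simple_graph W F" unfolding simple_graph_def W_def F_def by auto
  have "F\<^sup>*\<^sup>* 0 1" "F\<^sup>*\<^sup>* 1 0" unfolding F_def by auto
  then have cg: "connected_graph W F" unfolding connected_graph_def W_def using sg
    by (auto simp: W_def)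
  have cW: "card W = 2" unfolding W_def by simp
  have deg: "Defs.degree W F u = 1" if "u \<in> W" for u
  proof -
    have "{v \<in> W. F u v} = {1 - u}" using that unfolding W_def F_def by auto
    then show ?thesis unfolding Defs.degree_def by simp
  qed
  have md: "max_degree W F = 1"
  proof -
    have "Defs.degree W F ` W = {1}" using deg unfolding W_def by auto
    then show ?thesis unfolding max_degree_def by simp
  qed
  have ne: "num_edges W F = 1"
  proof -
    have "{{u, v} | u v. u \<in> W \<and> v \<in> W \<and> F u v} = {{0, 1::nat}}"
      unfolding W_def F_def by auto
    then show ?thesis unfolding num_edges_def by simp
  qed
  have M0: "ABC_matrix W F u v = 0" for u v
  proof (cases "F u v")
    case True
    then have "u \<in> W" "v \<in> W" using sg unfolding simple_graph_def by auto
    then show ?thesis unfolding ABC_matrix_def using True deg by simp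
  next
    case False
    then show ?thesis unfolding ABC_matrix_def by simp
  qed
  have "{mu. is_eigenvalue W (ABC_matrix W F) mu} = {0}"
  proof -
    have "is_eigenvalue W (ABC_matrix W F) mu \<longleftrightarrow> mu = 0" for mu
    proof
      assume "is_eigenvalue W (ABC_matrix W F) mu"
      then obtain x i where "i \<in> W" "x i \<noteq> 0" "(\<Sum>j\<in>W. ABC_matrix W F i j * x j) = mu * x i"
        unfolding is_eigenvalue_def by blast
      then show "mu = 0" using M0 by simp
    next
      assume "mu = 0"
      then show "is_eigenvalue W (ABC_matrix W F) mu" unfolding is_eigenvalue_def M0
        by (intro exI[of _ "\<lambda>_. 1"]) (auto simp: W_def)
    qed
    then show ?thesis by auto
  qed
  then have "ABC_spectral_radius W F = 0" unfolding ABC_spectral_radius_def by simp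
  moreover have "sqrt (real (max_degree W F)
                 + (2 * real (num_edges W F) - real (card W) + 1) / real (max_degree W F) - 2) = 0"
    using md ne cW by simp
  ultimately show ?thesis using cg cW by (metis order_refl)
qed


theorem theorem2p1:
  fixes V :: "'a set" and E :: "'a \<Rightarrow> 'a \<Rightarrow> bool"
  assumes "connected_graph V E" and "card V \<ge> 2"
  shows "ABC_spectral_radius V E \<le>
           sqrt (real (max_degree V E)
                 + (2 * real (num_edges V E) - real (card V) + 1) / real (max_degree V E) - 2)
         \<and> (\<exists>(W :: nat set) F. connected_graph W F \<and> card W \<ge> 2 \<and>
              ABC_spectral_radius W F =
              sqrt (real (max_degree W F)
                 + (2 * real (num_edges W F) - real (card W) + 1) / real (max_degree W F) - 2))"
proof -
  have fin: "finite V" and ne: "V \<noteq> {}"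
    using assms(1) unfolding connected_graph_def simple_graph_def by auto
  have sym: "\<And>i j. ABC_matrix V E i j = ABC_matrix V E j i"
  proof -
    fix i j
    have "E i j = E j i" using assms(1) unfolding connected_graph_def simple_graph_def by blast
    then show "ABC_matrix V E i j = ABC_matrix V E j i"
      unfolding ABC_matrix_def by (simp add: add.commute mult.commute)
  qed
  define S where "S = {mu. is_eigenvalue V (ABC_matrix V E) mu}"
  have "finite S" unfolding S_def by (rule eig_finite[OF fin])
  moreover have "S \<noteq> {}" unfolding S_def using eig_nonempty[OF fin ne sym] by auto
  ultimately have "ABC_spectral_radius V E \<in> S" unfolding ABC_spectral_radius_def S_def[symmetric]
    by (rule Max_in)
  then have "ABC_spectral_radius V E \<le>
           sqrt (real (max_degree V E)
                 + (2 * real (num_edges V E) - real (card V) + 1) / real (max_degree V E) - 2)"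
    unfolding S_def using eig_bound[OF assms] by blast
  then show ?thesis using witness by blast
qed

end
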